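(* Let $q(x)=x^TAx+b^Tx+c$ be a bivariate quadratic function ($A\in\mathbb{R}^{2\times2}$ symmetric) and $P\subset\mathbb{R}^2$ a polytope, and let $\operatorname{conv}(q+I_P)=\min_j(r_j+I_{P_j})$ be its convex envelope written as a piecewise function over a polyhedral subdivision $P=\bigcup_jP_j$, each $r_j$ being affine, quadratic, or a rational function (quadratic polynomial divided by an affine function). Then the function $\max_j (r_j+I_{P_j})^*$ (which equals $[\operatorname{conv}(q+I_P)]^*$) admits a parabolic subdivision of $\mathbb{R}^2$.
   Context: $I_C$ is the indicator function of $C$. The conjugate is $g^*(s)=\sup_x(s^Tx-g(x))$; the convex envelope $\operatorname{conv} g$ is the largest lower semicontinuous convex minorant of $g$. A polyhedral subdivision of a convex set $R$ is a finite union of polyhedral sets whose pairwise intersections are empty, a vertex, or an edge. A parabola is a set $\{(u,v): au^2+buv+cv^2+du+ev+f=0\}$ with $(a,\dots,f)\neq0$ and $b^2-4ac=0$. A parabolic region is a finite intersection of sets $\{a_is_1^2+b_is_1s_2+c_is_2^2+d_is_1+e_is_2+f_i\le 0\}$ with $(a_i,\dots,f_i)\ne0$ and $b_i^2-4a_ic_i=0$. A function admits a parabolic subdivision of $\mathbb{R}^2$ if $\mathbb{R}^2$ is a finite union of parabolic regions with pairwise intersections empty or contained in a parabola, and the function is given by a single (quadratic or affine) expression on each region. *)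

theory Defs
  imports "HOL-Analysis.Analysis"
begin

type_synonym pt = "real ^ 2"

definition quad_fun :: "real^2^2 \<Rightarrow> pt \<Rightarrow> real \<Rightarrow> pt \<Rightarrow> real" where
  "quad_fun A b c x = x \<bullet> (A *v x) + b \<bullet> x + c"

definition ind :: "pt set \<Rightarrow> pt \<Rightarrow> ereal" where
  "ind C x = (if x \<in> C then 0 else \<infinity>)"

definition conjugate :: "(pt \<Rightarrow> ereal) \<Rightarrow> pt \<Rightarrow> ereal" where
  "conjugate g s = (SUP x. ereal (s \<bullet> x) - g x)"

definition epigraph :: "(pt \<Rightarrow> ereal) \<Rightarrow> (pt \<times> real) set" where
  "epigraph g = {(x, \<mu>). g x \<le> ereal \<mu>}"

definition ereal_convex_fun :: "(pt \<Rightarrow> ereal) \<Rightarrow> bool" where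
  "ereal_convex_fun g \<longleftrightarrow> convex (epigraph g)"

definition ereal_lsc_fun :: "(pt \<Rightarrow> ereal) \<Rightarrow> bool" where
  "ereal_lsc_fun g \<longleftrightarrow> closed (epigraph g)"

definition convex_envelope :: "(pt \<Rightarrow> ereal) \<Rightarrow> pt \<Rightarrow> ereal" where
  "convex_envelope g x =
     (SUP h \<in> {h. ereal_convex_fun h \<and> ereal_lsc_fun h \<and> (\<forall>y. h y \<le> g y)}. h x)"

definition polyhedral_subdivision :: "pt set \<Rightarrow> nat \<Rightarrow> (nat \<Rightarrow> pt set) \<Rightarrow> bool" where
  "polyhedral_subdivision R n Ps \<longleftrightarrow>
     R = (\<Union>j<n. Ps j) \<and> (\<forall>j<n. polyhedron (Ps j)) \<and>
     (\<forall>i<n. \<forall>j<n. i \<noteq> j \<longrightarrow>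
        Ps i \<inter> Ps j = {} \<or>
        (Ps i \<inter> Ps j face_of Ps i \<and> Ps i \<inter> Ps j face_of Ps j \<and> aff_dim (Ps i \<inter> Ps j) \<le> 1))"

definition affine_piece :: "pt set \<Rightarrow> (pt \<Rightarrow> real) \<Rightarrow> bool" where
  "affine_piece C r \<longleftrightarrow> (\<exists>b c. \<forall>x\<in>C. r x = b \<bullet> x + c)"

definition quadratic_piece :: "pt set \<Rightarrow> (pt \<Rightarrow> real) \<Rightarrow> bool" where
  "quadratic_piece C r \<longleftrightarrow> (\<exists>A b c. transpose A = A \<and> (\<forall>x\<in>C. r x = quad_fun A b c x))"

definition rational_piece :: "pt set \<Rightarrow> (pt \<Rightarrow> real) \<Rightarrow> bool" where
  "rational_piece C r \<longleftrightarrow>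
     (\<exists>A b c d e. transpose A = A \<and> (\<exists>x\<in>C. d \<bullet> x + e \<noteq> 0) \<and>
        (\<forall>x\<in>C. d \<bullet> x + e \<noteq> 0 \<longrightarrow> r x = quad_fun A b c x / (d \<bullet> x + e)))"

type_synonym coeffs = "real \<times> real \<times> real \<times> real \<times> real \<times> real"

definition conic_poly :: "coeffs \<Rightarrow> pt \<Rightarrow> real" where
  "conic_poly k s = (case k of (a, b, c, d, e, f) \<Rightarrow>
     a * (s$1)^2 + b * (s$1) * (s$2) + c * (s$2)^2 + d * (s$1) + e * (s$2) + f)"

definition parabolic_coeffs :: "coeffs \<Rightarrow> bool" where
  "parabolic_coeffs k \<longleftrightarrow> (case k of (a, b, c, d, e, f) \<Rightarrow>
     (a, b, c, d, e, f) \<noteq> (0, 0, 0, 0, 0, 0) \<and> b^2 - 4 * a * c = 0)"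

definition parabola :: "pt set \<Rightarrow> bool" where
  "parabola S \<longleftrightarrow> (\<exists>k. parabolic_coeffs k \<and> S = {s. conic_poly k s = 0})"

definition parabolic_region :: "pt set \<Rightarrow> bool" where
  "parabolic_region R \<longleftrightarrow>
     (\<exists>K. finite K \<and> (\<forall>k\<in>K. parabolic_coeffs k) \<and> R = {s. \<forall>k\<in>K. conic_poly k s \<le> 0})"

definition admits_parabolic_subdivision :: "(pt \<Rightarrow> ereal) \<Rightarrow> bool" where
  "admits_parabolic_subdivision F \<longleftrightarrow>
     (\<exists>\<R>. finite \<R> \<and> (\<forall>R\<in>\<R>. parabolic_region R) \<and> \<Union>\<R> = UNIV \<and>
        (\<forall>R1\<in>\<R>. \<forall>R2\<in>\<R>. R1 \<noteq> R2 \<longrightarrow>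
            R1 \<inter> R2 = {} \<or> (\<exists>S. parabola S \<and> R1 \<inter> R2 \<subseteq> S)) \<and>
        (\<forall>R\<in>\<R>. \<exists>M w k. \<forall>s\<in>R. F s = ereal (quad_fun M w k s)))"

end

theory Submission
  imports Defs
begin

lemma inner2: "(x::real^2) \<bullet> y = x$1*y$1 + x$2*y$2" by (simp add: inner_vec_def sum_2)
lemma mv2: "((M::real^2^2) *v x)$1 = M$1$1*x$1 + M$1$2*x$2" "(M *v x)$2 = M$2$1*x$1 + M$2$2*x$2"
  by (simp_all add: matrix_vector_mult_def sum_2)

definition is_aff :: "(real^2 \<Rightarrow> real) \<Rightarrow> bool" where
  "is_aff h \<longleftrightarrow> (\<exists>\<alpha> \<beta>. \<forall>s. h s = \<alpha> \<bullet> s + \<beta>)"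

lemma is_aff_const[simp]: "is_aff (\<lambda>s. k)" unfolding is_aff_def by (rule exI[of _ 0]) auto
lemma is_aff_inner[simp]: "is_aff (\<lambda>s. s \<bullet> d)" unfolding is_aff_def
  by (rule exI[of _ d], rule exI[of _ 0]) (auto simp: inner_commute)
lemma is_aff_add: "is_aff f \<Longrightarrow> is_aff g \<Longrightarrow> is_aff (\<lambda>s. f s + g s)"
proof -
  assume "is_aff f" "is_aff g"
  then obtain a1 b1 a2 b2 where "\<forall>s. f s = a1 \<bullet> s + b1" "\<forall>s. g s = a2 \<bullet> s + b2" unfolding is_aff_def by blast
  then show ?thesis unfolding is_aff_def by (intro exI[of _ "a1+a2"] exI[of _ "b1+b2"]) (auto simp: inner_add_left)
qed
lemma is_aff_scale: "is_aff f \<Longrightarrow> is_aff (\<lambda>s. k * f s)"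
  unfolding is_aff_def apply clarify
  subgoal for a1 b1 by (rule exI[of _ "k *\<^sub>R a1"], rule exI[of _ "k*b1"]) (auto simp: algebra_simps)
  done
lemma is_aff_neg: "is_aff f \<Longrightarrow> is_aff (\<lambda>s. - f s)"
  using is_aff_scale[of f "-1"] by simp
lemma is_aff_diff: "is_aff f \<Longrightarrow> is_aff g \<Longrightarrow> is_aff (\<lambda>s. f s - g s)"
  using is_aff_add[of f "\<lambda>s. - g s"] is_aff_neg[of g] by simp
lemma is_aff_div: "is_aff f \<Longrightarrow> is_aff (\<lambda>s. f s / k)"
  using is_aff_scale[of f "1/k"] by simp

definition isQ :: "(real^2 \<Rightarrow> real) \<Rightarrow> bool" where
  "isQ h \<longleftrightarrow> (\<exists>k. \<forall>s. h s = conic_poly k s)"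

lemma isQ_aff: "is_aff f \<Longrightarrow> isQ f"
  unfolding is_aff_def isQ_def apply clarify
  subgoal for a be by (rule exI[of _ "(0,0,0,a$1,a$2,be)"]) (auto simp: conic_poly_def inner2)
  done
lemma isQ_mult_aff: "is_aff f \<Longrightarrow> is_aff g \<Longrightarrow> isQ (\<lambda>s. f s * g s)"
proof -
  assume "is_aff f" "is_aff g"
  then obtain a1 b1 a2 b2 where "\<forall>s. f s = a1 \<bullet> s + b1" "\<forall>s. g s = a2 \<bullet> s + b2" unfolding is_aff_def by blast
  then show ?thesis unfolding isQ_def
    by (intro exI[of _ "(a1$1*a2$1, a1$1*a2$2 + a1$2*a2$1, a1$2*a2$2, a1$1*b2+b1*a2$1, a1$2*b2+b1*a2$2, b1*b2)"])
       (auto simp: conic_poly_def inner2 power2_eq_square algebra_simps)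
qed
lemma isQ_add: "isQ f \<Longrightarrow> isQ g \<Longrightarrow> isQ (\<lambda>s. f s + g s)"
proof -
  assume "isQ f" "isQ g"
  then obtain k1 k2 where h: "\<forall>s. f s = conic_poly k1 s" "\<forall>s. g s = conic_poly k2 s" unfolding isQ_def by blast
  obtain a1 b1 c1 d1 e1 f1 where 1: "k1 = (a1,b1,c1,d1,e1,f1)" by (cases k1) blast
  obtain a2 b2 c2 d2 e2 f2 where 2: "k2 = (a2,b2,c2,d2,e2,f2)" by (cases k2) blast
  show ?thesis unfolding isQ_def using h unfolding 1 2
    by (intro exI[of _ "(a1+a2,b1+b2,c1+c2,d1+d2,e1+e2,f1+f2)"]) (auto simp: conic_poly_def algebra_simps)
qed
lemma isQ_scale: "isQ f \<Longrightarrow> isQ (\<lambda>s. k * f s)"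
proof -
  assume "isQ f"
  then obtain k1 where h: "\<forall>s. f s = conic_poly k1 s" unfolding isQ_def by blast
  obtain a1 b1 c1 d1 e1 f1 where 1: "k1 = (a1,b1,c1,d1,e1,f1)" by (cases k1) blast
  show ?thesis unfolding isQ_def using h unfolding 1
    by (intro exI[of _ "(k*a1,k*b1,k*c1,k*d1,k*e1,k*f1)"]) (auto simp: conic_poly_def algebra_simps)
qed
lemma isQ_diff: "isQ f \<Longrightarrow> isQ g \<Longrightarrow> isQ (\<lambda>s. f s - g s)"
  using isQ_add[of f "\<lambda>s. -1 * g s"] isQ_scale[of g "-1"] by simp

lemma isQ_quad_fun: "isQ f \<Longrightarrow> \<exists>M w k. \<forall>s. f s = quad_fun M w k s"
proof -
  assume "isQ f"
  then obtain k1 where h: "\<forall>s. f s = conic_poly k1 s" unfolding isQ_def by blast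
  obtain a1 b1 c1 d1 e1 f1 where 1: "k1 = (a1,b1,c1,d1,e1,f1)" by (cases k1) blast
  define M :: "real^2^2" where "M = (\<chi> i j. if i = 1 \<and> j = 1 then a1 else if i = 1 \<and> j = 2 then b1 else if i = 2 \<and> j = 2 then c1 else 0)"
  have M: "M$1$1 = a1" "M$1$2 = b1" "M$2$1 = 0" "M$2$2 = c1" unfolding M_def by auto
  show ?thesis using h unfolding 1
      apply (intro exI[of _ M] exI[of _ "vector [d1, e1] :: real^2"] exI[of _ f1])
      by (auto simp: conic_poly_def quad_fun_def inner2 mv2 M power2_eq_square algebra_simps)
qed

definition compat :: "coeffs set \<Rightarrow> real^2 \<Rightarrow> real^2 \<Rightarrow> bool" where
  "compat K s1 s2 \<longleftrightarrow> (\<forall>k\<in>K. (conic_poly k s1 \<le> 0 \<and> conic_poly k s2 \<le> 0) \<or> (0 \<le> conic_poly k s1 \<and> 0 \<le> conic_poly k s2))"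

definition SD :: "(real^2 \<Rightarrow> real) \<Rightarrow> bool" where
  "SD h \<longleftrightarrow> (\<exists>K. finite K \<and> (\<forall>k\<in>K. parabolic_coeffs k) \<and> (\<forall>s1 s2. compat K s1 s2 \<longrightarrow> \<not> (h s1 < 0 \<and> 0 < h s2)))"

lemma compat_sym: "compat K s1 s2 \<Longrightarrow> compat K s2 s1" unfolding compat_def by blast
lemma compat_mono: "compat K s1 s2 \<Longrightarrow> K' \<subseteq> K \<Longrightarrow> compat K' s1 s2" unfolding compat_def by blast

lemma SD_conic:
  assumes "b1^2 - 4*a1*c1 = 0"
  shows "SD (conic_poly (a1,b1,c1,d1,e1,f1))"
proof (cases "(a1,b1,c1,d1,e1,f1) = (0,0,0,0,0,0)")
  case True
  then show ?thesis unfolding SD_def by (intro exI[of _ "{}"]) (auto simp: conic_poly_def)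
next
  case False
  then show ?thesis unfolding SD_def
    apply (intro exI[of _ "{(a1,b1,c1,d1,e1,f1)}"])
    using assms by (auto simp: parabolic_coeffs_def compat_def)
qed

lemma SD_cong: "SD h \<Longrightarrow> (\<And>s. g s = h s) \<Longrightarrow> SD g"
proof -
  assume "SD h" "\<And>s. g s = h s"
  then have "g = h" by auto
  then show ?thesis using \<open>SD h\<close> by simp
qed

lemma SD_aff_sq:
  assumes "is_aff l0" "is_aff l"
  shows "SD (\<lambda>s. l0 s + cc * (l s)^2)"
proof -
  obtain a0 b0 a be where h: "\<forall>s. l0 s = a0 \<bullet> s + b0" "\<forall>s. l s = a \<bullet> s + be"
    using assms unfolding is_aff_def by blast
  have "SD (conic_poly (cc*(a$1)^2, 2*cc*a$1*a$2, cc*(a$2)^2, a0$1 + 2*cc*be*a$1, a0$2 + 2*cc*be*a$2, b0 + cc*be^2))"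
    by (rule SD_conic) (simp add: power2_eq_square algebra_simps)
  then show ?thesis
    by (rule SD_cong) (simp add: h conic_poly_def inner2 power2_eq_square algebra_simps)
qed

lemma SD_aff: "is_aff l0 \<Longrightarrow> SD l0"
  using SD_aff_sq[of l0 "\<lambda>s. 0" 0] by simp

definition affc :: "(real^2 \<Rightarrow> real) \<Rightarrow> coeffs" where
  "affc h = (0,0,0, h (vector[1,0]) - h 0, h (vector[0,1]) - h 0, h 0)"

lemma affc: assumes "is_aff h" shows "conic_poly (affc h) s = h s"
proof -
  obtain a be where h: "\<forall>s. h s = a \<bullet> s + be" using assms unfolding is_aff_def by blast
  show ?thesis by (simp add: h affc_def conic_poly_def inner2)
qed

lemma affc_par: assumes "is_aff h" "h s \<noteq> 0" shows "parabolic_coeffs (affc h)"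
proof -
  have "affc h \<noteq> (0,0,0,0,0,0)"
  proof
    assume "affc h = (0,0,0,0,0,0)"
    then have "conic_poly (affc h) s = 0" by (simp add: conic_poly_def)
    then show False using affc[OF assms(1)] assms(2) by simp
  qed
  then show ?thesis unfolding affc_def parabolic_coeffs_def by auto
qed

lemma SD_prod:
  assumes "is_aff l1" "is_aff l2"
  shows "SD (\<lambda>s. l1 s * l2 s)"
proof -
  define K where "K = {k \<in> {affc l1, affc l2}. parabolic_coeffs k}"
  have "\<not> (l1 s1 * l2 s1 < 0 \<and> 0 < l1 s2 * l2 s2)" if c: "compat K s1 s2" for s1 s2
  proof
    assume a: "l1 s1 * l2 s1 < 0 \<and> 0 < l1 s2 * l2 s2"
    then have n: "l1 s1 \<noteq> 0" "l2 s1 \<noteq> 0" by auto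
    have "affc l1 \<in> K" "affc l2 \<in> K" unfolding K_def using affc_par assms n by auto
    then have "(l1 s1 \<le> 0 \<and> l1 s2 \<le> 0) \<or> (0 \<le> l1 s1 \<and> 0 \<le> l1 s2)"
              "(l2 s1 \<le> 0 \<and> l2 s2 \<le> 0) \<or> (0 \<le> l2 s1 \<and> 0 \<le> l2 s2)"
      using c unfolding compat_def by (auto simp: affc assms)
    then show False
    proof (elim disjE conjE)
      assume "l1 s1 \<le> 0" "l1 s2 \<le> 0" "l2 s1 \<le> 0" "l2 s2 \<le> 0"
      then show False using mult_nonpos_nonpos[of "l1 s1" "l2 s1"] a by linarith
    next
      assume "l1 s1 \<le> 0" "l1 s2 \<le> 0" "0 \<le> l2 s1" "0 \<le> l2 s2"
      then show False using mult_nonpos_nonneg[of "l1 s2" "l2 s2"] a by linarith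
    next
      assume "0 \<le> l1 s1" "0 \<le> l1 s2" "l2 s1 \<le> 0" "l2 s2 \<le> 0"
      then show False using mult_nonneg_nonpos[of "l1 s2" "l2 s2"] a by linarith
    next
      assume "0 \<le> l1 s1" "0 \<le> l1 s2" "0 \<le> l2 s1" "0 \<le> l2 s2"
      then show False using mult_nonneg_nonneg[of "l1 s1" "l2 s1"] a by linarith
    qed
  qed
  then show ?thesis unfolding SD_def K_def by (intro exI[of _ K]) (auto simp: K_def)
qed

lemma SD_nonneg: "(\<And>s. 0 \<le> h s) \<Longrightarrow> SD h"
  unfolding SD_def by (intro exI[of _ "{}"]) (auto simp: not_less)
lemma SD_nonpos: "(\<And>s. h s \<le> 0) \<Longrightarrow> SD h"
  unfolding SD_def by (intro exI[of _ "{}"]) (auto simp: not_less)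

lemma SD_neg: "SD h \<Longrightarrow> SD (\<lambda>s. - h s)"
proof -
  assume "SD h"
  then obtain K where K: "finite K" "\<forall>k\<in>K. parabolic_coeffs k" "\<forall>s1 s2. compat K s1 s2 \<longrightarrow> \<not> (h s1 < 0 \<and> 0 < h s2)"
    unfolding SD_def by blast
  have "\<forall>s1 s2. compat K s1 s2 \<longrightarrow> \<not> (- h s1 < 0 \<and> 0 < - h s2)"
  proof (intro allI impI)
    fix s1 s2 assume "compat K s1 s2"
    then have "compat K s2 s1" by (rule compat_sym)
    then show "\<not> (- h s1 < 0 \<and> 0 < - h s2)" using K(3) by fastforce
  qed
  then show ?thesis unfolding SD_def using K(1,2) by blast
qed

definition negc :: "coeffs \<Rightarrow> coeffs" where
  "negc k = (case k of (a,b,c,d,e,f) \<Rightarrow> (-a,-b,-c,-d,-e,-f))"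
lemma negc_poly[simp]: "conic_poly (negc k) s = - conic_poly k s"
  by (cases k) (simp add: negc_def conic_poly_def)
lemma negc_par: "parabolic_coeffs k \<Longrightarrow> parabolic_coeffs (negc k)"
  by (cases k) (auto simp: negc_def parabolic_coeffs_def power2_eq_square)

definition cell :: "coeffs set \<Rightarrow> coeffs set \<Rightarrow> (real^2) set" where
  "cell K S = {s. \<forall>k\<in>K. if k \<in> S then conic_poly k s \<le> 0 else conic_poly (negc k) s \<le> 0}"

lemma cell_compat: "s1 \<in> cell K S \<Longrightarrow> s2 \<in> cell K S \<Longrightarrow> compat K s1 s2"
  unfolding cell_def compat_def by (auto split: if_splits)

lemma cells_subdiv:
  assumes fin: "finite K" and par: "\<forall>k\<in>K. parabolic_coeffs k"
    and vals: "\<And>S. S \<subseteq> K \<Longrightarrow> \<exists>M w k0. \<forall>s\<in>cell K S. F s = ereal (quad_fun M w k0 s)"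
  shows "admits_parabolic_subdivision F"
proof -
  have h1: "finite (cell K ` Pow K)" using fin by simp
  have h2: "parabolic_region R" if "R \<in> cell K ` Pow K" for R
  proof -
    obtain S where S: "S \<subseteq> K" "R = cell K S" using \<open>R \<in> cell K ` Pow K\<close> by auto
    show ?thesis unfolding parabolic_region_def
    proof (intro exI[of _ "S \<union> negc ` (K - S)"] conjI ballI)
      show "finite (S \<union> negc ` (K - S))" using fin S finite_subset by auto
      show "parabolic_coeffs k" if "k \<in> S \<union> negc ` (K - S)" for k
        using that S par negc_par by auto
      show "R = {s. \<forall>k\<in>S \<union> negc ` (K - S). conic_poly k s \<le> 0}"
      proof (rule set_eqI)
        fix s
        have e: "(\<forall>k\<in>S \<union> negc ` (K - S). conic_poly k s \<le> 0) \<longleftrightarrow>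
              (\<forall>k\<in>S. conic_poly k s \<le> 0) \<and> (\<forall>k\<in>K - S. conic_poly (negc k) s \<le> 0)" by blast
        have "s \<in> cell K S \<longleftrightarrow> (\<forall>k\<in>S. conic_poly k s \<le> 0) \<and> (\<forall>k\<in>K - S. conic_poly (negc k) s \<le> 0)"
          unfolding cell_def mem_Collect_eq
        proof safe
          fix k assume "\<forall>k\<in>K. if k \<in> S then conic_poly k s \<le> 0 else conic_poly (negc k) s \<le> 0" "k \<in> S"
          then show "conic_poly k s \<le> 0" using S(1) by (metis subsetD)
        next
          fix k assume "\<forall>k\<in>K. if k \<in> S then conic_poly k s \<le> 0 else conic_poly (negc k) s \<le> 0" "k \<in> K" "k \<notin> S"
          then show "conic_poly (negc k) s \<le> 0" by metis
        next
          fix k assume "\<forall>k\<in>S. conic_poly k s \<le> 0" "\<forall>k\<in>K - S. conic_poly (negc k) s \<le> 0" "k \<in> K"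
          then show "if k \<in> S then conic_poly k s \<le> 0 else conic_poly (negc k) s \<le> 0" by (metis DiffI)
        qed
        then show "s \<in> R \<longleftrightarrow> s \<in> {s. \<forall>k\<in>S \<union> negc ` (K - S). conic_poly k s \<le> 0}"
          using e S(2) by (simp del: negc_poly)
      qed
    qed
  qed
  have h3: "\<Union> (cell K ` Pow K) = UNIV"
  proof -
    have "s \<in> cell K {k\<in>K. conic_poly k s \<le> 0}" for s unfolding cell_def by auto
    moreover have "{k\<in>K. conic_poly k s \<le> 0} \<in> Pow K" for s by auto
    ultimately show ?thesis by blast
  qed
  have h4: "R1 \<inter> R2 = {} \<or> (\<exists>S. parabola S \<and> R1 \<inter> R2 \<subseteq> S)"
    if r1: "R1 \<in> cell K ` Pow K" and r2: "R2 \<in> cell K ` Pow K" and r12: "R1 \<noteq> R2" for R1 R2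
  proof -
    obtain S1 where S1: "S1 \<subseteq> K" "R1 = cell K S1" using r1 by blast
    obtain S2 where S2: "S2 \<subseteq> K" "R2 = cell K S2" using r2 by blast
    have S: "S1 \<subseteq> K" "S2 \<subseteq> K" "R1 = cell K S1" "R2 = cell K S2" using S1 S2 by auto
    then have "S1 \<noteq> S2" using r12 by blast
    then obtain k where k: "k \<in> K" "(k \<in> S1) \<noteq> (k \<in> S2)" using S(1,2) by blast
    have "conic_poly k s = 0" if i1: "s \<in> R1" and i2: "s \<in> R2" for s
    proof -
      have "if k \<in> S1 then conic_poly k s \<le> 0 else conic_poly (negc k) s \<le> 0"
        using i1 k(1) unfolding S cell_def by blast
      moreover have "if k \<in> S2 then conic_poly k s \<le> 0 else conic_poly (negc k) s \<le> 0"
        using i2 k(1) unfolding S cell_def by blast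
      ultimately show ?thesis using k(2) by (auto split: if_splits)
    qed
    then have "R1 \<inter> R2 \<subseteq> {s. conic_poly k s = 0}" by blast
    moreover have "parabola {s. conic_poly k s = 0}" unfolding parabola_def using par k(1) by blast
    ultimately show ?thesis by blast
  qed
  have h5: "\<exists>M w k. \<forall>s\<in>R. F s = ereal (quad_fun M w k s)" if "R \<in> cell K ` Pow K" for R
  proof -
    from that obtain S where "S \<subseteq> K" "R = cell K S" by blast
    then show ?thesis using vals by blast
  qed
  define RR where "RR = cell K ` Pow K"
  have "finite RR \<and> (\<forall>R\<in>RR. parabolic_region R) \<and> \<Union>RR = UNIV \<and>
        (\<forall>R1\<in>RR. \<forall>R2\<in>RR. R1 \<noteq> R2 \<longrightarrow>
            R1 \<inter> R2 = {} \<or> (\<exists>S. parabola S \<and> R1 \<inter> R2 \<subseteq> S)) \<and>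
        (\<forall>R\<in>RR. \<exists>M w k. \<forall>s\<in>R. F s = ereal (quad_fun M w k s))"
    unfolding RR_def
  proof (intro conjI)
    show "\<forall>R\<in>cell K ` Pow K. parabolic_region R" using h2 by blast
    show "\<forall>R1\<in>cell K ` Pow K. \<forall>R2\<in>cell K ` Pow K. R1 \<noteq> R2 \<longrightarrow>
            R1 \<inter> R2 = {} \<or> (\<exists>S. parabola S \<and> R1 \<inter> R2 \<subseteq> S)" using h4 by blast
    show "\<forall>R\<in>cell K ` Pow K. \<exists>M w k. \<forall>s\<in>R. F s = ereal (quad_fun M w k s)" using h5 by blast
  qed (fact h1, fact h3)
  then show ?thesis unfolding admits_parabolic_subdivision_def by (rule exI)
qed

locale qs =
  fixes A :: "real^2^2" and qb :: "real^2" and qc :: real and V :: "(real^2) set"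
  assumes symA: "transpose A = A" and finV: "finite V" and neV: "V \<noteq> {}"
begin

definition Bf :: "real^2 \<Rightarrow> real^2 \<Rightarrow> real" where "Bf x y = x \<bullet> (A *v y)"
definition Q :: "real^2 \<Rightarrow> real" where "Q x = Bf x x"
definition phi :: "real^2 \<Rightarrow> real^2 \<Rightarrow> real" where "phi s x = s \<bullet> x - quad_fun A qb qc x"
definition tau :: "real^2 \<Rightarrow> real^2 \<Rightarrow> real^2 \<Rightarrow> real" where "tau s v d = (s - qb) \<bullet> d - 2 * Bf v d"

lemma A12: "A$1$2 = A$2$1"
proof -
  have "(transpose A)$1$2 = A$2$1" by (simp add: transpose_def)
  then show ?thesis using symA by simp
qed

lemma Bf2: "Bf x y = x$1 * (A$1$1 * y$1 + A$2$1 * y$2) + x$2 * (A$2$1 * y$1 + A$2$2 * y$2)"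
  unfolding Bf_def by (simp add: inner2 mv2 A12)

lemma Bf_sym: "Bf x y = Bf y x" unfolding Bf2 by (simp add: algebra_simps)

lemma line_expand: "phi s (v + t *\<^sub>R d) = phi s v + t * tau s v d - t^2 * Q d"
  unfolding phi_def tau_def Q_def quad_fun_def Bf_def[symmetric] Bf2
  by (simp add: inner2 algebra_simps power2_eq_square)

lemma plane_expand: "phi s (v + a *\<^sub>R d2 + e *\<^sub>R d3) =
   phi s v + a * tau s v d2 + e * tau s v d3 - (a^2 * Q d2 + 2*a*e*Bf d2 d3 + e^2 * Q d3)"
  unfolding phi_def tau_def Q_def quad_fun_def Bf_def[symmetric] Bf2
  by (simp add: inner2 algebra_simps power2_eq_square)

lemma is_aff_phi: "is_aff (\<lambda>s. phi s v)"
  unfolding phi_def by (intro is_aff_diff) (auto simp: inner_commute)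

lemma is_aff_tau: "is_aff (\<lambda>s. tau s v d)"
proof -
  have "tau s v d = s \<bullet> d + (- (qb \<bullet> d) - 2 * Bf v d)" for s unfolding tau_def by (simp add: inner_diff_left)
  then show ?thesis using is_aff_add[OF is_aff_inner[of d] is_aff_const] by simp
qed

end

datatype cand = CV "real^2" | CE "real^2" "real^2" | CI "real^2" "real^2" "real^2"

definition cross2 :: "real^2 \<Rightarrow> real^2 \<Rightarrow> real" where "cross2 x y = x$1 * y$2 - x$2 * y$1"

context qs begin

definition kap :: "real^2 \<Rightarrow> real^2 \<Rightarrow> real" where "kap v w = Q (w - v)"
definition tst :: "real^2 \<Rightarrow> real^2 \<Rightarrow> real^2 \<Rightarrow> real" where
  "tst v w s = tau s v (w - v) / (2 * kap v w)"
definition dtI :: "real^2 \<Rightarrow> real^2 \<Rightarrow> real^2 \<Rightarrow> real" where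
  "dtI v1 v2 v3 = Q (v2 - v1) * Q (v3 - v1) - (Bf (v2 - v1) (v3 - v1))^2"
definition ca :: "real^2 \<Rightarrow> real^2 \<Rightarrow> real^2 \<Rightarrow> real^2 \<Rightarrow> real" where
  "ca v1 v2 v3 s = (Q (v3 - v1) * tau s v1 (v2 - v1) - Bf (v2 - v1) (v3 - v1) * tau s v1 (v3 - v1)) / (2 * dtI v1 v2 v3)"
definition cb :: "real^2 \<Rightarrow> real^2 \<Rightarrow> real^2 \<Rightarrow> real^2 \<Rightarrow> real" where
  "cb v1 v2 v3 s = (Q (v2 - v1) * tau s v1 (v3 - v1) - Bf (v2 - v1) (v3 - v1) * tau s v1 (v2 - v1)) / (2 * dtI v1 v2 v3)"

fun pt :: "cand \<Rightarrow> real^2 \<Rightarrow> real^2" where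
  "pt (CV v) s = v"
| "pt (CE v w) s = v + tst v w s *\<^sub>R (w - v)"
| "pt (CI v1 v2 v3) s = v1 + ca v1 v2 v3 s *\<^sub>R (v2 - v1) + cb v1 v2 v3 s *\<^sub>R (v3 - v1)"

fun valid :: "cand \<Rightarrow> real^2 \<Rightarrow> bool" where
  "valid (CV v) s = True"
| "valid (CE v w) s = (0 \<le> tst v w s \<and> tst v w s \<le> 1)"
| "valid (CI v1 v2 v3) s = (0 \<le> ca v1 v2 v3 s \<and> 0 \<le> cb v1 v2 v3 s \<and> ca v1 v2 v3 s + cb v1 v2 v3 s \<le> 1)"

fun good :: "cand \<Rightarrow> bool" where
  "good (CV v) = (v \<in> V)"
| "good (CE v w) = (v \<in> V \<and> w \<in> V \<and> 0 < kap v w)"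
| "good (CI v1 v2 v3) = (v1 \<in> V \<and> v2 \<in> V \<and> v3 \<in> V \<and> 0 < Q (v2 - v1) \<and> 0 < dtI v1 v2 v3)"

fun cons :: "cand \<Rightarrow> (real^2 \<Rightarrow> real) set" where
  "cons (CV v) = {}"
| "cons (CE v w) = {\<lambda>s. - tst v w s, \<lambda>s. tst v w s - 1}"
| "cons (CI v1 v2 v3) = {\<lambda>s. - ca v1 v2 v3 s, \<lambda>s. - cb v1 v2 v3 s, \<lambda>s. ca v1 v2 v3 s + cb v1 v2 v3 s - 1}"

definition val :: "cand \<Rightarrow> real^2 \<Rightarrow> real" where "val k s = phi s (pt k s)"

lemma valid_cons: "valid k s \<longleftrightarrow> (\<forall>h\<in>cons k. h s \<le> 0)"
  by (cases k) auto

lemma is_aff_tst: "is_aff (tst v w)"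
proof -
  have "tst v w = (\<lambda>s. tau s v (w - v) / (2 * kap v w))" by (rule ext) (simp add: tst_def)
  then show ?thesis using is_aff_div[OF is_aff_tau] by simp
qed

lemma is_aff_ca: "is_aff (ca v1 v2 v3)"
  unfolding ca_def by (intro is_aff_div is_aff_diff is_aff_scale is_aff_tau)
lemma is_aff_cb: "is_aff (cb v1 v2 v3)"
  unfolding cb_def by (intro is_aff_div is_aff_diff is_aff_scale is_aff_tau)

lemma cons_aff: "h \<in> cons k \<Longrightarrow> is_aff h"
  by (cases k) (auto intro!: is_aff_neg is_aff_diff is_aff_add is_aff_tst is_aff_ca is_aff_cb)

lemma val_E: "0 < kap v w \<Longrightarrow> val (CE v w) s = phi s v + (tau s v (w - v))^2 / (4 * kap v w)"
  unfolding val_def pt.simps line_expand tst_def kap_def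
  by (simp add: field_simps power2_eq_square)

lemma val_E_line: assumes "0 < kap v w" shows "phi s (v + t *\<^sub>R (w - v)) = val (CE v w) s - kap v w * (t - tst v w s)^2"
  using assms unfolding val_E[OF assms] line_expand tst_def kap_def
  by (simp add: field_simps power2_eq_square)

lemma isQ_val: "good k \<Longrightarrow> isQ (val k)"
proof (cases k)
  case (CV v)
  then have "val k = (\<lambda>s. phi s v)" by (auto simp: val_def)
  then show ?thesis using isQ_aff[OF is_aff_phi[of v]] by simp
next
  case (CE v w)
  assume "good k"
  then have k: "0 < kap v w" using CE by simp
  have "val k = (\<lambda>s. phi s v + (1 / (4 * kap v w)) * (tau s v (w - v) * tau s v (w - v)))"
    using val_E[OF k] CE by (auto simp: power2_eq_square)
  then show ?thesis
    by (simp only:) (intro isQ_add isQ_scale isQ_mult_aff isQ_aff is_aff_phi is_aff_tau)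
next
  case (CI v1 v2 v3)
  have "val k = (\<lambda>s. phi s v1 + ca v1 v2 v3 s * tau s v1 (v2 - v1) + cb v1 v2 v3 s * tau s v1 (v3 - v1)
     - (Q (v2 - v1) * (ca v1 v2 v3 s * ca v1 v2 v3 s) + (2 * Bf (v2 - v1) (v3 - v1)) * (ca v1 v2 v3 s * cb v1 v2 v3 s)
        + Q (v3 - v1) * (cb v1 v2 v3 s * cb v1 v2 v3 s)))"
    using CI by (intro ext) (simp only: val_def pt.simps plane_expand, simp add: power2_eq_square algebra_simps)
  then show ?thesis
    by (simp only:) (intro isQ_add isQ_diff isQ_scale isQ_mult_aff isQ_aff is_aff_phi is_aff_tau is_aff_ca is_aff_cb)
qed

lemma pt_in_hull: "good k \<Longrightarrow> valid k s \<Longrightarrow> pt k s \<in> convex hull V"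
proof (cases k)
  case (CV v)
  assume "good k" then show ?thesis using CV by (simp add: hull_inc)
next
  case (CE v w)
  assume g: "good k" and va: "valid k s"
  let ?t = "tst v w s"
  have "pt k s = (1 - ?t) *\<^sub>R v + ?t *\<^sub>R w" using CE by (simp add: algebra_simps)
  moreover have "v \<in> convex hull V" "w \<in> convex hull V" using g CE by (auto simp: hull_inc)
  ultimately show ?thesis using va CE convexD_alt[OF convex_convex_hull] by auto
next
  case (CI v1 v2 v3)
  assume g: "good k" and va: "valid k s"
  let ?a = "ca v1 v2 v3 s" and ?b = "cb v1 v2 v3 s"
  have "pt k s = (1 - ?a - ?b) *\<^sub>R v1 + ?a *\<^sub>R v2 + ?b *\<^sub>R v3" using CI by (simp add: algebra_simps)
  then have "pt k s \<in> convex hull {v1, v2, v3}" unfolding convex_hull_3 using va CI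
    by (intro CollectI exI[of _ "1 - ?a - ?b"] exI[of _ ?a] exI[of _ ?b]) auto
  moreover have "convex hull {v1, v2, v3} \<subseteq> convex hull V" using g CI by (intro hull_mono) auto
  ultimately show ?thesis by blast
qed

end

context qs begin

lemma dtI_eq: "dtI v1 v2 v3 = (A$1$1 * A$2$2 - (A$2$1)^2) * (cross2 (v2 - v1) (v3 - v1))^2"
  unfolding dtI_def Q_def Bf2 cross2_def by (simp add: algebra_simps power2_eq_square)

lemma tau_shift: "tau s (x + a *\<^sub>R d2 + e *\<^sub>R d3) d = tau s x d - 2 * (a * Bf d2 d + e * Bf d3 d)"
  unfolding tau_def Bf2 by (simp add: algebra_simps)

lemma solve2_gen:
  fixes t2 t3 g22 g23 g33 D :: real
  assumes D: "D = g22 * g33 - g23^2" "D \<noteq> 0"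
  shows "t2 - 2 * ((g33 * t2 - g23 * t3) / (2 * D) * g22 + (g22 * t3 - g23 * t2) / (2 * D) * g23) = 0"
    "t3 - 2 * ((g33 * t2 - g23 * t3) / (2 * D) * g23 + (g22 * t3 - g23 * t2) / (2 * D) * g33) = 0"
proof -
  have e1: "(g33 * t2 - g23 * t3) / (2 * D) * g22 + (g22 * t3 - g23 * t2) / (2 * D) * g23
      = ((g33 * t2 - g23 * t3) * g22 + (g22 * t3 - g23 * t2) * g23) / (2 * D)"
    by (simp add: add_divide_distrib)
  have n1: "(g33 * t2 - g23 * t3) * g22 + (g22 * t3 - g23 * t2) * g23 = t2 * D"
    unfolding D(1) by (simp add: algebra_simps power2_eq_square)
  show "t2 - 2 * ((g33 * t2 - g23 * t3) / (2 * D) * g22 + (g22 * t3 - g23 * t2) / (2 * D) * g23) = 0"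
    unfolding e1 n1 using D(2) by simp
  have e2: "(g33 * t2 - g23 * t3) / (2 * D) * g23 + (g22 * t3 - g23 * t2) / (2 * D) * g33
      = ((g33 * t2 - g23 * t3) * g23 + (g22 * t3 - g23 * t2) * g33) / (2 * D)"
    by (simp add: add_divide_distrib)
  have n2: "(g33 * t2 - g23 * t3) * g23 + (g22 * t3 - g23 * t2) * g33 = t3 * D"
    unfolding D(1) by (simp add: algebra_simps power2_eq_square)
  show "t3 - 2 * ((g33 * t2 - g23 * t3) / (2 * D) * g23 + (g22 * t3 - g23 * t2) / (2 * D) * g33) = 0"
    unfolding e2 n2 using D(2) by simp
qed

lemma solve2:
  fixes t2 t3 g22 g23 g33 :: real
  assumes "g22 * g33 - g23^2 \<noteq> 0"
  shows "t2 - 2 * ((g33 * t2 - g23 * t3) / (2 * (g22 * g33 - g23^2)) * g22 + (g22 * t3 - g23 * t2) / (2 * (g22 * g33 - g23^2)) * g23) = 0"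
    "t3 - 2 * ((g33 * t2 - g23 * t3) / (2 * (g22 * g33 - g23^2)) * g23 + (g22 * t3 - g23 * t2) / (2 * (g22 * g33 - g23^2)) * g33) = 0"
  using solve2_gen[OF refl assms] by auto

lemma decomp2:
  fixes y d2 d3 :: "real^2"
  assumes c: "cross2 d2 d3 \<noteq> 0"
  shows "y = (cross2 y d3 / cross2 d2 d3) *\<^sub>R d2 + (cross2 d2 y / cross2 d2 d3) *\<^sub>R d3"
proof -
  let ?c = "cross2 d2 d3"
  have "(cross2 y d3 / ?c) * d2$i + (cross2 d2 y / ?c) * d3$i = (cross2 y d3 * d2$i + cross2 d2 y * d3$i) / ?c" for i
    by (simp add: add_divide_distrib)
  moreover have "cross2 y d3 * d2$1 + cross2 d2 y * d3$1 = y$1 * ?c" "cross2 y d3 * d2$2 + cross2 d2 y * d3$2 = y$2 * ?c"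
    unfolding cross2_def by (simp_all add: algebra_simps)
  ultimately show ?thesis using c by (simp add: vec_eq_iff forall_2)
qed

lemma I_crit:
  assumes "0 < dtI v1 v2 v3"
  shows "tau s (pt (CI v1 v2 v3) s) (v2 - v1) = 0" "tau s (pt (CI v1 v2 v3) s) (v3 - v1) = 0"
proof -
  have d: "dtI v1 v2 v3 \<noteq> 0" using assms by simp
  show "tau s (pt (CI v1 v2 v3) s) (v2 - v1) = 0"
    unfolding pt.simps tau_shift ca_def cb_def using solve2(1)[OF d[unfolded dtI_def]]
    by (simp add: Bf_sym[of "v3 - v1" "v2 - v1"] dtI_def Q_def)
  show "tau s (pt (CI v1 v2 v3) s) (v3 - v1) = 0"
    unfolding pt.simps tau_shift ca_def cb_def using solve2(2)[OF d[unfolded dtI_def]]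
    by (simp add: Bf_sym[of "v3 - v1" "v2 - v1"] dtI_def Q_def)
qed

lemma I_max:
  assumes g: "good (CI v1 v2 v3)"
  shows "phi s x \<le> val (CI v1 v2 v3) s"
proof -
  let ?d2 = "v2 - v1" and ?d3 = "v3 - v1" and ?xs = "pt (CI v1 v2 v3) s"
  have q2: "0 < Q ?d2" and dt: "0 < dtI v1 v2 v3" using g by auto
  have cr: "cross2 ?d2 ?d3 \<noteq> 0" using dt unfolding dtI_eq by auto
  define y where "y = x - ?xs"
  define al where "al = cross2 y ?d3 / cross2 ?d2 ?d3"
  define be where "be = cross2 ?d2 y / cross2 ?d2 ?d3"
  have x: "x = ?xs + al *\<^sub>R ?d2 + be *\<^sub>R ?d3"
  proof -
    have "y = al *\<^sub>R ?d2 + be *\<^sub>R ?d3"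
      unfolding al_def be_def by (rule decomp2[OF cr])
    then show ?thesis unfolding y_def by (simp add: algebra_simps)
  qed
  have form: "0 \<le> al^2 * Q ?d2 + 2*al*be*Bf ?d2 ?d3 + be^2 * Q ?d3"
  proof -
    have "Q ?d2 * (al^2 * Q ?d2 + 2*al*be*Bf ?d2 ?d3 + be^2 * Q ?d3) = (Q ?d2 * al + Bf ?d2 ?d3 * be)^2 + dtI v1 v2 v3 * be^2"
      unfolding dtI_def by (simp add: algebra_simps power2_eq_square)
    also have "\<dots> \<ge> 0" using dt by simp
    finally show ?thesis using q2 by (simp add: zero_le_mult_iff)
  qed
  have "phi s x = phi s ?xs - (al^2 * Q ?d2 + 2*al*be*Bf ?d2 ?d3 + be^2 * Q ?d3)"
    unfolding x plane_expand I_crit[OF dt] by simp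
  then show ?thesis using form unfolding val_def by simp
qed

lemma val_le_I: "good (CI v1 v2 v3) \<Longrightarrow> val k s \<le> val (CI v1 v2 v3) s"
  unfolding val_def[of k] using I_max by blast

end

fun notI :: "cand \<Rightarrow> bool" where
  "notI (CI _ _ _) = False" | "notI _ = True"

context qs begin

lemma seg_cand:
  assumes v: "v \<in> V" "w \<in> V" and t: "0 \<le> t" "t \<le> 1"
  shows "\<exists>k. notI k \<and> good k \<and> valid k s \<and> phi s (v + t *\<^sub>R (w - v)) \<le> val k s"
proof -
  define al where "al = phi s v"
  define ta where "ta = tau s v (w - v)"
  define ka where "ka = kap v w"
  have e: "phi s (v + t *\<^sub>R (w - v)) = al + t * ta - t^2 * ka"
    unfolding al_def ta_def ka_def kap_def line_expand ..
  have vv: "val (CV v) s = al" unfolding val_def al_def by simp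
  have vw: "val (CV w) s = al + ta - ka"
  proof -
    have "phi s w = phi s (v + 1 *\<^sub>R (w - v))" by simp
    then show ?thesis unfolding val_def al_def ta_def ka_def kap_def line_expand by simp
  qed
  have gv: "good (CV v)" "good (CV w)" "valid (CV v) s" "valid (CV w) s" using v by auto
  consider "ka \<le> 0" | "0 < ka" "ta < 0" | "0 < ka" "0 \<le> ta" "ta \<le> 2 * ka" | "0 < ka" "2 * ka < ta" by linarith
  then show ?thesis
  proof cases
    case 1
    have "t * (t - 1) \<le> 0" using t by (simp add: mult_nonneg_nonpos)
    then have "0 \<le> ka * (t * (t - 1))" using 1 by (simp add: mult_nonpos_nonpos)
    then have le: "al + t * ta - t^2 * ka \<le> al + t * (ta - ka)" by (simp add: algebra_simps power2_eq_square)
    show ?thesis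
    proof (cases "0 \<le> ta - ka")
      case True
      have "t * (ta - ka) \<le> 1 * (ta - ka)" using t True by (intro mult_right_mono) auto
      then show ?thesis using le e vw gv by (intro exI[of _ "CV w"]) auto
    next
      case False
      have "t * (ta - ka) \<le> 0" using t False by (simp add: mult_nonneg_nonpos)
      then show ?thesis using le e vv gv by (intro exI[of _ "CV v"]) auto
    qed
  next
    case 2
    have "t * ta \<le> 0" "0 \<le> t^2 * ka" using t 2 by (auto simp: mult_nonneg_nonpos)
    then show ?thesis using e vv gv by (intro exI[of _ "CV v"]) auto
  next
    case 3
    have "good (CE v w)" using v 3 ka_def by auto
    moreover have "valid (CE v w) s" using 3 unfolding valid.simps tst_def ta_def[symmetric] ka_def[symmetric]
      by (auto simp: field_simps)
    moreover have "phi s (v + t *\<^sub>R (w - v)) \<le> val (CE v w) s"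
      using val_E_line[of v w s t] 3 ka_def by simp
    ultimately show ?thesis by (intro exI[of _ "CE v w"]) simp
  next
    case 4
    have tk: "t * ka \<le> ka" using t 4 by (simp add: mult_left_le_one_le)
    have "0 \<le> 1 - t" "0 \<le> ta - ka - t * ka" using t tk 4 by linarith+
    then have "0 \<le> (1 - t) * (ta - ka - t * ka)" by (rule mult_nonneg_nonneg)
    then have "al + t * ta - t^2 * ka \<le> al + ta - ka" by (simp add: algebra_simps power2_eq_square)
    then show ?thesis using e vw gv by (intro exI[of _ "CV w"]) auto
  qed
qed

lemma bdry_cand:
  assumes v: "v1 \<in> V" "v2 \<in> V" "v3 \<in> V" and ae: "0 \<le> a" "0 \<le> e" "a + e \<le> 1"
    and b: "a = 0 \<or> e = 0 \<or> a + e = 1"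
  shows "\<exists>k. notI k \<and> good k \<and> valid k s \<and> phi s (v1 + a *\<^sub>R (v2 - v1) + e *\<^sub>R (v3 - v1)) \<le> val k s"
proof -
  consider "a = 0" | "e = 0" | "a + e = 1" using b by blast
  then show ?thesis
  proof cases
    case 1
    then show ?thesis using seg_cand[of v1 v3 e s] v ae by simp
  next
    case 2
    then show ?thesis using seg_cand[of v1 v2 a s] v ae by simp
  next
    case 3
    have "v1 + a *\<^sub>R (v2 - v1) + e *\<^sub>R (v3 - v1) = v3 + a *\<^sub>R (v2 - v3)"
      proof -
      have ee: "e = 1 - a" using 3 by simp
      show ?thesis unfolding ee by (simp add: vec_eq_iff forall_2 algebra_simps)
    qed
    then show ?thesis using seg_cand[of v3 v2 a s] v ae by simp
  qed
qed

end

context qs begin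

lemma tri_param:
  "x \<in> convex hull {v1, v2, v3} \<longleftrightarrow> (\<exists>a e. 0 \<le> a \<and> 0 \<le> e \<and> a + e \<le> 1 \<and> x = v1 + a *\<^sub>R (v2 - v1) + e *\<^sub>R (v3 - v1))"
proof
  assume "x \<in> convex hull {v1, v2, v3}"
  then obtain u a e where h: "0 \<le> u" "0 \<le> a" "0 \<le> e" "u + a + e = 1" "x = u *\<^sub>R v1 + a *\<^sub>R v2 + e *\<^sub>R v3"
    unfolding convex_hull_3 by blast
  have u: "u = 1 - a - e" using h(4) by simp
  have "x = v1 + a *\<^sub>R (v2 - v1) + e *\<^sub>R (v3 - v1)" unfolding h(5) u by (simp add: algebra_simps)
  then show "\<exists>a e. 0 \<le> a \<and> 0 \<le> e \<and> a + e \<le> 1 \<and> x = v1 + a *\<^sub>R (v2 - v1) + e *\<^sub>R (v3 - v1)"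
    using h u by (intro exI[of _ a] exI[of _ e]) auto
next
  assume "\<exists>a e. 0 \<le> a \<and> 0 \<le> e \<and> a + e \<le> 1 \<and> x = v1 + a *\<^sub>R (v2 - v1) + e *\<^sub>R (v3 - v1)"
  then obtain a e where h: "0 \<le> a" "0 \<le> e" "a + e \<le> 1" "x = v1 + a *\<^sub>R (v2 - v1) + e *\<^sub>R (v3 - v1)" by blast
  have "x = (1 - a - e) *\<^sub>R v1 + a *\<^sub>R v2 + e *\<^sub>R v3" unfolding h(4) by (simp add: algebra_simps)
  then show "x \<in> convex hull {v1, v2, v3}" unfolding convex_hull_3 using h
    by (intro CollectI exI[of _ "1 - a - e"] exI[of _ a] exI[of _ e]) auto
qed

lemma cont_phi: "continuous_on S (phi s)"
proof -
  have "phi s = (\<lambda>x. s \<bullet> x - (x \<bullet> (A *v x) + qb \<bullet> x + qc))" by (rule ext) (simp add: phi_def quad_fun_def)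
  then show ?thesis by (simp only:) (intro continuous_intros)
qed

lemma local_max_deriv:
  fixes c0 g h d :: real
  assumes d: "0 < d" and le: "\<And>y. \<bar>y\<bar> < d \<Longrightarrow> c0 + y * g - y^2 * h \<le> c0"
  shows "g = 0"
proof -
  have der: "((\<lambda>y. c0 + y * g - y^2 * h) has_real_derivative g) (at 0)"
    by (auto intro!: derivative_eq_intros)
  show ?thesis
    by (rule DERIV_local_max[OF der d]) (use le in auto)
qed

lemma interior_psi:
  fixes a0 e0 y z :: real and v1 v2 v3 s :: "real^2"
  defines "g22 \<equiv> Q (v2 - v1)" and "g23 \<equiv> Bf (v2 - v1) (v3 - v1)" and "g33 \<equiv> Q (v3 - v1)"
  defines "G2 \<equiv> tau s v1 (v2 - v1) - 2 * (a0 * g22 + e0 * g23)"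
  defines "G3 \<equiv> tau s v1 (v3 - v1) - 2 * (a0 * g23 + e0 * g33)"
  shows "phi s (v1 + (a0 + y) *\<^sub>R (v2 - v1) + (e0 + z) *\<^sub>R (v3 - v1)) =
     phi s (v1 + a0 *\<^sub>R (v2 - v1) + e0 *\<^sub>R (v3 - v1)) + y * G2 + z * G3 - (y^2 * g22 + 2 * y * z * g23 + z^2 * g33)"
  unfolding plane_expand G2_def G3_def g22_def g23_def g33_def
  by (simp add: algebra_simps power2_eq_square)

lemma tri_cand:
  assumes v: "v1 \<in> V" "v2 \<in> V" "v3 \<in> V" and x: "x \<in> convex hull {v1, v2, v3}"
  shows "\<exists>k. good k \<and> valid k s \<and> phi s x \<le> val k s"
proof -
  let ?T = "convex hull {v1, v2, v3}"
  let ?d2 = "v2 - v1" and ?d3 = "v3 - v1"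
  define psi where "psi a e = phi s (v1 + a *\<^sub>R ?d2 + e *\<^sub>R ?d3)" for a e
  obtain x0 where x0: "x0 \<in> ?T" "\<forall>y\<in>?T. phi s y \<le> phi s x0"
    using continuous_attains_sup[OF finite_imp_compact_convex_hull[of "{v1,v2,v3}"] _ cont_phi] x by blast
  obtain a0 e0 where ae0: "0 \<le> a0" "0 \<le> e0" "a0 + e0 \<le> 1" and x0e: "x0 = v1 + a0 *\<^sub>R ?d2 + e0 *\<^sub>R ?d3"
    using x0(1) unfolding tri_param by blast
  have mx: "psi a e \<le> psi a0 e0" if "0 \<le> a" "0 \<le> e" "a + e \<le> 1" for a e
  proof -
    have "v1 + a *\<^sub>R ?d2 + e *\<^sub>R ?d3 \<in> ?T" unfolding tri_param using that by blast
    then show ?thesis using x0(2) unfolding psi_def x0e by blast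
  qed
  have bd: "\<exists>k. good k \<and> valid k s \<and> psi a e \<le> val k s"
    if "0 \<le> a" "0 \<le> e" "a + e \<le> 1" "a = 0 \<or> e = 0 \<or> a + e = 1" for a e
    unfolding psi_def using bdry_cand[OF v that] by blast
  have "\<exists>k. good k \<and> valid k s \<and> psi a0 e0 \<le> val k s"
  proof (cases "a0 = 0 \<or> e0 = 0 \<or> a0 + e0 = 1")
    case True
    then show ?thesis using bd ae0 by blast
  next
    case False
    then have int: "0 < a0" "0 < e0" "a0 + e0 < 1" using ae0 by auto
    define g22 where "g22 = Q ?d2"
    define g23 where "g23 = Bf ?d2 ?d3"
    define g33 where "g33 = Q ?d3"
    define G2 where "G2 = tau s v1 ?d2 - 2 * (a0 * g22 + e0 * g23)"
    define G3 where "G3 = tau s v1 ?d3 - 2 * (a0 * g23 + e0 * g33)"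
    have pe: "psi (a0 + y) (e0 + z) = psi a0 e0 + y * G2 + z * G3 - (y^2 * g22 + 2 * y * z * g23 + z^2 * g33)" for y z
      unfolding psi_def G2_def G3_def g22_def g23_def g33_def by (rule interior_psi)
    define dd where "dd = min a0 (1 - a0 - e0)"
    have dd: "0 < dd" using int unfolding dd_def by auto
    define dd' where "dd' = min e0 (1 - a0 - e0)"
    have dd': "0 < dd'" using int unfolding dd'_def by auto
    have G2: "G2 = 0"
    proof (rule local_max_deriv[OF dd, of "psi a0 e0" _ g22])
      fix y :: real assume "\<bar>y\<bar> < dd"
      then have "psi (a0 + y) (e0 + 0) \<le> psi a0 e0" using int unfolding dd_def by (intro mx) auto
      then show "psi a0 e0 + y * G2 - y^2 * g22 \<le> psi a0 e0" unfolding pe by simp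
    qed
    have G3: "G3 = 0"
    proof (rule local_max_deriv[OF dd', of "psi a0 e0" _ g33])
      fix z :: real assume "\<bar>z\<bar> < dd'"
      then have "psi (a0 + 0) (e0 + z) \<le> psi a0 e0" using int unfolding dd'_def by (intro mx) auto
      then show "psi a0 e0 + z * G3 - z^2 * g33 \<le> psi a0 e0" unfolding pe by simp
    qed
    show ?thesis
    proof (cases "0 < g22 \<and> 0 < g22 * g33 - g23^2")
      case True
      have dt: "dtI v1 v2 v3 = g22 * g33 - g23^2" unfolding dtI_def g22_def g23_def g33_def ..
      have gd: "good (CI v1 v2 v3)" using True v dt g22_def by auto
      have t2: "tau s v1 ?d2 = 2 * (a0 * g22 + e0 * g23)" and t3: "tau s v1 ?d3 = 2 * (a0 * g23 + e0 * g33)"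
        using G2 G3 unfolding G2_def G3_def by auto
      define D where "D = g22 * g33 - g23^2"
      have Dp: "0 < D" using True D_def by simp
      have "ca v1 v2 v3 s = (2 * a0 * D) / (2 * D)"
        unfolding ca_def t2 t3 dt g22_def[symmetric] g23_def[symmetric] g33_def[symmetric] D_def
        by (simp add: algebra_simps power2_eq_square)
      then have ca: "ca v1 v2 v3 s = a0" using Dp by simp
      have "cb v1 v2 v3 s = (2 * e0 * D) / (2 * D)"
        unfolding cb_def t2 t3 dt g22_def[symmetric] g23_def[symmetric] g33_def[symmetric] D_def
        by (simp add: algebra_simps power2_eq_square)
      then have cb: "cb v1 v2 v3 s = e0" using Dp by simp
      have "valid (CI v1 v2 v3) s" using ca cb ae0 by simp
      moreover have "val (CI v1 v2 v3) s = psi a0 e0" unfolding val_def psi_def using ca cb by simp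
      ultimately show ?thesis using gd by (intro exI[of _ "CI v1 v2 v3"]) simp
    next
      case False
      obtain d1 d2' where dne: "d1 \<noteq> 0 \<or> d2' \<noteq> 0" and dq: "d1^2 * g22 + 2 * d1 * d2' * g23 + d2'^2 * g33 \<le> 0"
      proof (cases "g22 \<le> 0")
        case True
        then show ?thesis using that[of 1 0] by simp
      next
        case gp: False
        then have "g22 * g33 - g23^2 \<le> 0" using False by auto
        moreover have "(- g23)^2 * g22 + 2 * (- g23) * g22 * g23 + g22^2 * g33 = g22 * (g22 * g33 - g23^2)"
          by (simp add: algebra_simps power2_eq_square)
        ultimately have "(- g23)^2 * g22 + 2 * (- g23) * g22 * g23 + g22^2 * g33 \<le> 0"
          using gp by (simp add: mult_nonneg_nonpos)
        then show ?thesis using that[of "- g23" g22] gp by simp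
      qed
      define m where "m t = min (a0 + t * d1) (min (e0 + t * d2') (1 - (a0 + t * d1) - (e0 + t * d2')))" for t
      obtain T where T: "0 \<le> T" "m T \<le> 0"
      proof (cases "d1 < 0")
        case True
        have "a0 + (a0 / (- d1)) * d1 = 0" using True by (simp add: field_simps)
        then have "m (a0 / (- d1)) \<le> 0" unfolding m_def by (simp add: min_le_iff_disj)
        moreover have "0 \<le> a0 / (- d1)" using True int by (intro divide_nonneg_pos) auto
        ultimately show ?thesis using that[of "a0 / (- d1)"] by blast
      next
        case nd1: False
        show ?thesis
        proof (cases "d2' < 0")
          case True
          have "e0 + (e0 / (- d2')) * d2' = 0" using True by (simp add: field_simps)
          then have "m (e0 / (- d2')) \<le> 0" unfolding m_def by (simp add: min_le_iff_disj)
          moreover have "0 \<le> e0 / (- d2')" using True int by (intro divide_nonneg_pos) auto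
          ultimately show ?thesis using that[of "e0 / (- d2')"] by blast
        next
          case False
          then have pos: "0 < d1 + d2'" using nd1 dne by linarith
          have "1 - (a0 + ((1 - a0 - e0) / (d1 + d2')) * d1) - (e0 + ((1 - a0 - e0) / (d1 + d2')) * d2') = 0"
            using pos by (simp add: field_simps)
          then have "m ((1 - a0 - e0) / (d1 + d2')) \<le> 0" unfolding m_def by (simp add: min_le_iff_disj)
          moreover have "0 \<le> (1 - a0 - e0) / (d1 + d2')" using pos int by (intro divide_nonneg_pos) auto
          ultimately show ?thesis using that[of "(1 - a0 - e0) / (d1 + d2')"] by blast
        qed
      qed
      have "m 0 > 0" using int unfolding m_def by simp
      have "continuous_on {0..T} (\<lambda>t. - m t)" unfolding m_def by (intro continuous_intros)
      then obtain t1 where t1: "0 \<le> t1" "t1 \<le> T" "- m t1 = 0"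
        using IVT'[of "\<lambda>t. - m t" 0 0 T] \<open>m 0 > 0\<close> T by auto
      define a1 where "a1 = a0 + t1 * d1"
      define e1 where "e1 = e0 + t1 * d2'"
      have m1: "min a1 (min e1 (1 - a1 - e1)) = 0" using t1 unfolding m_def a1_def e1_def by simp
      have in1: "0 \<le> a1" "0 \<le> e1" "a1 + e1 \<le> 1" "a1 = 0 \<or> e1 = 0 \<or> a1 + e1 = 1"
        using m1 by (auto simp: min_def split: if_splits)
      have "psi a1 e1 = psi a0 e0 - t1^2 * (d1^2 * g22 + 2 * d1 * d2' * g23 + d2'^2 * g33)"
        unfolding a1_def e1_def pe G2 G3 by (simp add: algebra_simps power2_eq_square)
      moreover have "0 \<le> t1^2 * (d1^2 * g22 + 2 * d1 * d2' * g23 + d2'^2 * g33) \<Longrightarrow> False \<or> True" by simp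
      moreover have "t1^2 * (d1^2 * g22 + 2 * d1 * d2' * g23 + d2'^2 * g33) \<le> 0"
        using dq by (simp add: mult_nonneg_nonpos)
      ultimately have "psi a0 e0 \<le> psi a1 e1" by linarith
      then show ?thesis using bd[OF in1] by force
    qed
  qed
  moreover have "phi s x \<le> psi a0 e0" using x0(2) x unfolding psi_def x0e[symmetric] by blast
  ultimately show ?thesis by force
qed

end

lemma card_le3_cases:
  assumes "finite S" "S \<noteq> {}" "card S \<le> 3"
  shows "\<exists>a b c. S = {a, b, c}"
proof -
  have "card S \<noteq> 0" using assms by simp
  then consider "card S = 1" | "card S = 2" | "card S = 3" using assms(3) by linarith
  then show ?thesis
  proof cases
    case 1 then obtain a where "S = {a}" by (rule card_1_singletonE)
    then show ?thesis by (intro exI[of _ a]) auto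
  next
    case 2 then obtain a b where "S = {a, b}" unfolding card_2_iff by blast
    then show ?thesis by (intro exI[of _ a] exI[of _ b]) auto
  next
    case 3 then obtain a b c where "S = {a, b, c}" unfolding card_3_iff by blast
    then show ?thesis by blast
  qed
qed

context qs begin

lemma hull_cand:
  assumes x: "x \<in> convex hull V"
  shows "\<exists>k. good k \<and> valid k s \<and> phi s x \<le> val k s"
proof -
  obtain S where S: "finite S" "S \<subseteq> V" "card S \<le> DIM(real^2) + 1" "x \<in> convex hull S"
    using x unfolding caratheodory[of V] by blast
  have "S \<noteq> {}" using S(4) by auto
  then obtain v1 v2 v3 where e: "S = {v1, v2, v3}" using card_le3_cases[OF S(1)] S(3) by auto
  show ?thesis using tri_cand[of v1 v2 v3 x s] S(2,4) unfolding e by auto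
qed


lemma tau_scale: "tau s v (l *\<^sub>R d) = l * tau s v d"
  unfolding tau_def Bf2 by (simp add: inner2 algebra_simps)
lemma Q_scale: "Q (l *\<^sub>R d) = l^2 * Q d"
  unfolding Q_def Bf2 by (simp add: algebra_simps power2_eq_square)
lemma tau_v: "tau s v2 d = tau s v1 d - 2 * Bf (v2 - v1) d"
  unfolding tau_def Bf2 by (simp add: algebra_simps)
lemma Q_zero: "Q 0 = 0" unfolding Q_def Bf2 by simp

lemma par_decomp:
  fixes d1 d2 :: "real^2"
  assumes c: "cross2 d1 d2 = 0" and d: "d1 \<noteq> 0"
  shows "d2 = ((d2 \<bullet> d1) / (d1 \<bullet> d1)) *\<^sub>R d1"
proof -
  have n: "d1 \<bullet> d1 \<noteq> 0" using d by simp
  have c': "d1$1 * d2$2 = d1$2 * d2$1" using c unfolding cross2_def by simp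
  have "(d2 \<bullet> d1) * d1$1 = d2$1 * (d1 \<bullet> d1)" "(d2 \<bullet> d1) * d1$2 = d2$2 * (d1 \<bullet> d1)"
    unfolding inner2 using c' by (simp_all add: algebra_simps)
  then show ?thesis using n by (simp add: vec_eq_iff forall_2 field_simps)
qed

lemma sq_diff_div:
  fixes T de k :: real
  shows "T^2/k - (T - de)^2/k = (2*de/k)*T - de^2/k"
proof -
  have a: "T^2/k - (T - de)^2/k = (T^2 - (T - de)^2)/k" by (simp add: diff_divide_distrib)
  have b: "(2*de/k)*T - de^2/k = (2*de*T - de^2)/k" by (simp add: diff_divide_distrib)
  have "T^2 - (T - de)^2 = 2*de*T - de^2" by (simp add: power2_eq_square algebra_simps)
  then show ?thesis unfolding a b by simp
qed

lemma SD_EV: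
  assumes k: "0 < kap v w"
  shows "SD (\<lambda>s. val (CE v w) s - phi s u)"
proof -
  have "SD (\<lambda>s. (phi s v - phi s u) + (1 / (4 * kap v w)) * (tau s v (w - v))^2)"
    by (intro SD_aff_sq is_aff_diff is_aff_phi is_aff_tau)
  then show ?thesis by (rule SD_cong) (simp add: val_E[OF k])
qed

lemma SD_VE:
  assumes k: "0 < kap v w"
  shows "SD (\<lambda>s. phi s u - val (CE v w) s)"
  using SD_neg[OF SD_EV[OF k, of u]] by (rule SD_cong) simp

lemma SD_EE:
  assumes k1: "0 < kap v1 w1" and k2: "0 < kap v2 w2"
  shows "SD (\<lambda>s. val (CE v1 w1) s - val (CE v2 w2) s)"
proof -
  let ?d1 = "w1 - v1" and ?d2 = "w2 - v2"
  have d1: "?d1 \<noteq> 0" using k1 Q_zero unfolding kap_def by auto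
  have d2: "?d2 \<noteq> 0" using k2 Q_zero unfolding kap_def by auto
  show ?thesis
  proof (cases "cross2 ?d1 ?d2 = 0")
    case False
    define al where "al = cross2 (v2 - v1) ?d2 / cross2 ?d1 ?d2"
    define be where "be = cross2 ?d1 (v2 - v1) / cross2 ?d1 ?d2"
    have dec: "v2 - v1 = al *\<^sub>R ?d1 + be *\<^sub>R ?d2" unfolding al_def be_def by (rule decomp2[OF False])
    have p2: "v1 + al *\<^sub>R ?d1 = v2 + (- be) *\<^sub>R ?d2" using dec by (simp add: algebra_simps)
    define r1 where "r1 = sqrt (kap v1 w1)"
    define r2 where "r2 = sqrt (kap v2 w2)"
    have r1: "r1^2 = kap v1 w1" unfolding r1_def using k1 by simp
    have r2: "r2^2 = kap v2 w2" unfolding r2_def using k2 by simp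
    have eq: "val (CE v1 w1) s - val (CE v2 w2) s =
       (r1 * (al - tst v1 w1 s) - r2 * (- be - tst v2 w2 s)) * (r1 * (al - tst v1 w1 s) + r2 * (- be - tst v2 w2 s))" for s
    proof -
      have "phi s (v1 + al *\<^sub>R ?d1) = val (CE v1 w1) s - kap v1 w1 * (al - tst v1 w1 s)^2"
        by (rule val_E_line[OF k1])
      moreover have "phi s (v2 + (- be) *\<^sub>R ?d2) = val (CE v2 w2) s - kap v2 w2 * (- be - tst v2 w2 s)^2"
        by (rule val_E_line[OF k2])
      ultimately have "val (CE v1 w1) s - val (CE v2 w2) s = kap v1 w1 * (al - tst v1 w1 s)^2 - kap v2 w2 * (- be - tst v2 w2 s)^2"
        using p2 by simp
      also have "\<dots> = (r1 * (al - tst v1 w1 s) - r2 * (- be - tst v2 w2 s)) * (r1 * (al - tst v1 w1 s) + r2 * (- be - tst v2 w2 s))"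
        unfolding r1[symmetric] r2[symmetric] by (simp add: algebra_simps power2_eq_square)
      finally show ?thesis .
    qed
    have "SD (\<lambda>s. (r1 * (al - tst v1 w1 s) - r2 * (- be - tst v2 w2 s)) * (r1 * (al - tst v1 w1 s) + r2 * (- be - tst v2 w2 s)))"
      by (intro SD_prod is_aff_add is_aff_diff is_aff_scale is_aff_const is_aff_neg is_aff_tst)
    then show ?thesis by (rule SD_cong) (rule eq)
  next
    case True
    define l where "l = (?d2 \<bullet> ?d1) / (?d1 \<bullet> ?d1)"
    have d2e: "?d2 = l *\<^sub>R ?d1" unfolding l_def by (rule par_decomp[OF True d1])
    have l0: "l \<noteq> 0" using d2 d2e by auto
    define de where "de = 2 * Bf (v2 - v1) ?d1"
    have eq: "val (CE v1 w1) s - val (CE v2 w2) s =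
      phi s v1 - phi s v2 + (2 * de / (4 * kap v1 w1)) * tau s v1 ?d1 - de^2 / (4 * kap v1 w1)" for s
    proof -
      have kk: "kap v2 w2 = l^2 * kap v1 w1" unfolding kap_def d2e Q_scale ..
      have "val (CE v2 w2) s = phi s v2 + (tau s v2 ?d2)^2 / (4 * kap v2 w2)" by (rule val_E[OF k2])
      also have "\<dots> = phi s v2 + (tau s v2 ?d1)^2 / (4 * kap v1 w1)"
        unfolding kk d2e tau_scale using l0 by (simp add: power_mult_distrib)
      also have "tau s v2 ?d1 = tau s v1 ?d1 - de" unfolding de_def by (rule tau_v)
      finally have "val (CE v2 w2) s = phi s v2 + (tau s v1 ?d1 - de)^2 / (4 * kap v1 w1)" .
      moreover have "val (CE v1 w1) s = phi s v1 + (tau s v1 ?d1)^2 / (4 * kap v1 w1)" by (rule val_E[OF k1])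
      ultimately show ?thesis using sq_diff_div[of "tau s v1 ?d1" "4 * kap v1 w1" de] by simp
    qed
    have "SD (\<lambda>s. phi s v1 - phi s v2 + (2 * de / (4 * kap v1 w1)) * tau s v1 ?d1 - de^2 / (4 * kap v1 w1))"
      by (intro SD_aff is_aff_add is_aff_diff is_aff_scale is_aff_const is_aff_phi is_aff_tau)
    then show ?thesis by (rule SD_cong) (rule eq)
  qed
qed

lemma SD_pair:
  assumes gi: "good i" and gj: "good j"
  shows "SD (\<lambda>s. val i s - val j s)"
proof (cases "\<exists>v1 v2 v3. i = CI v1 v2 v3")
  case True
  then obtain v1 v2 v3 where i: "i = CI v1 v2 v3" by blast
  show ?thesis using val_le_I[of v1 v2 v3 j] gi unfolding i by (intro SD_nonneg) auto
next
  case ni: False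
  show ?thesis
  proof (cases "\<exists>v1 v2 v3. j = CI v1 v2 v3")
    case True
    then obtain v1 v2 v3 where j: "j = CI v1 v2 v3" by blast
    show ?thesis using val_le_I[of v1 v2 v3 i] gj unfolding j by (intro SD_nonpos) auto
  next
    case nj: False
    show ?thesis
    proof (cases i)
      case (CV u)
      show ?thesis
      proof (cases j)
        case (CV u')
        show ?thesis unfolding \<open>i = CV u\<close> CV val_def pt.simps
          by (intro SD_aff is_aff_diff is_aff_phi)
      next
        case (CE v w)
        then show ?thesis using gj SD_VE[of v w u] unfolding \<open>i = CV u\<close> by (simp add: val_def)
      next
        case (CI v1 v2 v3) then show ?thesis using nj by blast
      qed
    next
      case (CE v w)
      show ?thesis
      proof (cases j)
        case (CV u)
        then show ?thesis using gi SD_EV[of v w u] unfolding \<open>i = CE v w\<close> by (simp add: val_def)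
      next
        case (CE v' w')
        then show ?thesis using gi gj SD_EE[of v w v' w'] unfolding \<open>i = CE v w\<close> by simp
      next
        case (CI v1 v2 v3) then show ?thesis using nj by blast
      qed
    next
      case (CI v1 v2 v3) then show ?thesis using ni by blast
    qed
  qed
qed

end

lemma finite_total_max:
  assumes "finite J" "J \<noteq> {}" and tot: "\<And>i j. i \<in> J \<Longrightarrow> j \<in> J \<Longrightarrow> R i j \<or> R j i"
    and tr: "\<And>i j k. R i j \<Longrightarrow> R j k \<Longrightarrow> R i k" and refl: "\<And>i. R i i"
  shows "\<exists>m\<in>J. \<forall>i\<in>J. R i m"
  using assms(1,2,3)
proof (induction J rule: finite_ne_induct)
  case (singleton x) then show ?case using refl by auto
next
  case (insert x F)
  then obtain m where m: "m \<in> F" "\<forall>i\<in>F. R i m" by blast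
  have "R x m \<or> R m x" using insert.prems m(1) by blast
  then show ?case
  proof
    assume "R x m" then show ?thesis using m by blast
  next
    assume "R m x" then show ?thesis using m tr refl by blast
  qed
qed

context qs begin

lemma sup_eq:
  assumes y: "y \<in> P" and mx: "\<forall>x\<in>P. phi s x \<le> phi s y"
  shows "(SUP x. ereal (s \<bullet> x) - (ereal (quad_fun A qb qc x) + ind P x)) = ereal (phi s y)"
proof (rule antisym)
  show "(SUP x. ereal (s \<bullet> x) - (ereal (quad_fun A qb qc x) + ind P x)) \<le> ereal (phi s y)"
  proof (rule SUP_least)
    fix x
    show "ereal (s \<bullet> x) - (ereal (quad_fun A qb qc x) + ind P x) \<le> ereal (phi s y)"
    proof (cases "x \<in> P")
      case True
      then show ?thesis using mx unfolding ind_def phi_def by auto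
    next
      case False
      then show ?thesis unfolding ind_def by simp
    qed
  qed
  show "ereal (phi s y) \<le> (SUP x. ereal (s \<bullet> x) - (ereal (quad_fun A qb qc x) + ind P x))"
    by (rule SUP_upper2[of y]) (use y in \<open>auto simp: ind_def phi_def\<close>)
qed

definition Good :: "cand set" where "Good = {k. good k}"

lemma finite_Good: "finite Good"
proof -
  have "Good \<subseteq> CV ` V \<union> (\<lambda>(v, w). CE v w) ` (V \<times> V) \<union> (\<lambda>(v1, v2, v3). CI v1 v2 v3) ` (V \<times> V \<times> V)"
  proof
    fix k assume "k \<in> Good"
    then show "k \<in> CV ` V \<union> (\<lambda>(v, w). CE v w) ` (V \<times> V) \<union> (\<lambda>(v1, v2, v3). CI v1 v2 v3) ` (V \<times> V \<times> V)"
      unfolding Good_def by (cases k) force+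
  qed
  then show ?thesis by (rule finite_subset) (simp add: finV)
qed

lemma finite_cons: "finite (cons k)" by (cases k) auto

definition K0 :: "coeffs set" where
  "K0 = {c \<in> (\<Union>k\<in>Good. affc ` cons k). parabolic_coeffs c}"

definition KpP :: "cand \<Rightarrow> cand \<Rightarrow> coeffs set \<Rightarrow> bool" where
  "KpP i j K \<longleftrightarrow> finite K \<and> (\<forall>k\<in>K. parabolic_coeffs k) \<and>
      (\<forall>s1 s2. compat K s1 s2 \<longrightarrow> \<not> (val i s1 - val j s1 < 0 \<and> 0 < val i s2 - val j s2))"

definition Kp :: "cand \<Rightarrow> cand \<Rightarrow> coeffs set" where
  "Kp i j = Eps (KpP i j)"

lemma Kp: assumes "good i" "good j"
  shows "finite (Kp i j)" "\<forall>k\<in>Kp i j. parabolic_coeffs k"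
    "\<And>s1 s2. compat (Kp i j) s1 s2 \<Longrightarrow> \<not> (val i s1 - val j s1 < 0 \<and> 0 < val i s2 - val j s2)"
proof -
  have "\<exists>K. KpP i j K"
    using SD_pair[OF assms] unfolding SD_def KpP_def by simp
  then have P: "KpP i j (Kp i j)" unfolding Kp_def by (rule someI_ex)
  show "finite (Kp i j)" using P unfolding KpP_def by blast
  show "\<forall>k\<in>Kp i j. parabolic_coeffs k" using P unfolding KpP_def by blast
  show "\<And>s1 s2. compat (Kp i j) s1 s2 \<Longrightarrow> \<not> (val i s1 - val j s1 < 0 \<and> 0 < val i s2 - val j s2)"
    using P unfolding KpP_def by blast
qed

definition KK :: "coeffs set" where
  "KK = K0 \<union> (\<Union>i\<in>Good. \<Union>j\<in>Good. Kp i j)"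

lemma KK_fin: "finite KK"
  unfolding KK_def K0_def using finite_Good finite_cons Kp(1) by (auto simp: Good_def)

lemma KK_par: "\<forall>k\<in>KK. parabolic_coeffs k"
  unfolding KK_def K0_def using Kp(2) by (auto simp: Good_def)

lemma strict_valid:
  assumes g: "good k" and s: "s \<in> cell KK S" and st: "\<forall>h\<in>cons k. h s < 0" and s': "s' \<in> cell KK S"
  shows "valid k s'"
  unfolding valid_cons
proof
  fix h assume h: "h \<in> cons k"
  have ha: "is_aff h" using cons_aff[OF h] .
  have "affc h \<in> KK" unfolding KK_def K0_def Good_def using g h affc_par[OF ha, of s] st by auto
  then have "(conic_poly (affc h) s \<le> 0 \<and> conic_poly (affc h) s' \<le> 0) \<or> (0 \<le> conic_poly (affc h) s \<and> 0 \<le> conic_poly (affc h) s')"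
    using cell_compat[OF s s'] unfolding compat_def by blast
  then show "h s' \<le> 0" using st h unfolding affc[OF ha] by force
qed

lemma reduceVE:
  assumes n: "notI k" and g: "good k" and va: "valid k s" and s: "s \<in> cell KK S"
  shows "\<exists>j. good j \<and> (\<forall>s'\<in>cell KK S. valid j s') \<and> val k s \<le> val j s"
proof (cases k)
  case (CV v)
  then show ?thesis using g by (intro exI[of _ k]) auto
next
  case (CE v w)
  show ?thesis
  proof (cases "tst v w s = 0")
    case True
    then show ?thesis using g CE by (intro exI[of _ "CV v"]) (auto simp: val_def)
  next
    case t0: False
    show ?thesis
    proof (cases "tst v w s = 1")
      case True
      then show ?thesis using g CE by (intro exI[of _ "CV w"]) (auto simp: val_def)
    next
      case False
      then have "\<forall>h\<in>cons k. h s < 0" using va t0 CE by auto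
      then show ?thesis using strict_valid[OF g s] g by (intro exI[of _ k]) auto
    qed
  qed
next
  case (CI v1 v2 v3)
  then show ?thesis using n by simp
qed

lemma reduce:
  assumes g: "good k" and va: "valid k s" and s: "s \<in> cell KK S"
  shows "\<exists>j. good j \<and> (\<forall>s'\<in>cell KK S. valid j s') \<and> val k s \<le> val j s"
proof (cases "notI k")
  case True
  then show ?thesis using reduceVE g va s by blast
next
  case False
  then obtain v1 v2 v3 where k: "k = CI v1 v2 v3" by (cases k) auto
  let ?a = "ca v1 v2 v3 s" and ?b = "cb v1 v2 v3 s"
  show ?thesis
  proof (cases "0 < ?a \<and> 0 < ?b \<and> ?a + ?b < 1")
    case True
    then have "\<forall>h\<in>cons k. h s < 0" using k by auto
    then show ?thesis using strict_valid[OF g s] g by (intro exI[of _ k]) auto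
  next
    case False
    have vv: "v1 \<in> V" "v2 \<in> V" "v3 \<in> V" using g k by auto
    have "0 \<le> ?a" "0 \<le> ?b" "?a + ?b \<le> 1" using va k by auto
    moreover then have "?a = 0 \<or> ?b = 0 \<or> ?a + ?b = 1" using False by linarith
    ultimately obtain k' where k': "notI k'" "good k'" "valid k' s" "val k s \<le> val k' s"
      using bdry_cand[OF vv, of ?a ?b s] unfolding k val_def by auto
    then obtain j where "good j" "\<forall>s'\<in>cell KK S. valid j s'" "val k' s \<le> val j s"
      using reduceVE[OF k'(1,2,3) s] by blast
    then show ?thesis using k'(4) by (intro exI[of _ j]) auto
  qed
qed

lemma cell_order:
  assumes gi: "good i" and gj: "good j"
  shows "(\<forall>s\<in>cell KK S. val i s \<le> val j s) \<or> (\<forall>s\<in>cell KK S. val j s \<le> val i s)"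
proof (rule ccontr)
  assume "\<not> ?thesis"
  then obtain s1 s2 where s: "s1 \<in> cell KK S" "s2 \<in> cell KK S" "val i s1 > val j s1" "val j s2 > val i s2"
    by (auto simp: not_le)
  have "Kp i j \<subseteq> KK" unfolding KK_def Good_def using gi gj by auto
  then have "compat (Kp i j) s2 s1" using cell_compat[OF s(2,1)] compat_mono by blast
  then show False using Kp(3)[OF gi gj, of s2 s1] s(3,4) by simp
qed

theorem main_qs:
  "admits_parabolic_subdivision (\<lambda>s. SUP x. ereal (s \<bullet> x) - (ereal (quad_fun A qb qc x) + ind (convex hull V) x))"
proof (rule cells_subdiv[OF KK_fin KK_par])
  fix S assume "S \<subseteq> KK"
  let ?C = "cell KK S"
  let ?J = "{k \<in> Good. \<forall>s\<in>?C. valid k s}"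
  obtain v0 where v0: "v0 \<in> V" using neV by blast
  have J: "finite ?J" "?J \<noteq> {}" using finite_Good v0 by (auto simp: Good_def intro!: exI[of _ "CV v0"])
  obtain m where m: "m \<in> ?J" "\<forall>i\<in>?J. \<forall>s\<in>?C. val i s \<le> val m s"
    using finite_total_max[OF J, of "\<lambda>i j. \<forall>s\<in>?C. val i s \<le> val j s"] cell_order
    by (force simp: Good_def intro: order_trans)
  have gm: "good m" using m(1) by (simp add: Good_def)
  obtain M w k0 where Mw: "\<forall>s. val m s = quad_fun M w k0 s" using isQ_quad_fun[OF isQ_val[OF gm]] by blast
  have "\<forall>s\<in>?C. (SUP x. ereal (s \<bullet> x) - (ereal (quad_fun A qb qc x) + ind (convex hull V) x)) = ereal (quad_fun M w k0 s)"
  proof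
    fix s assume s: "s \<in> ?C"
    have vm: "valid m s" using m(1) s by auto
    have "phi s x \<le> phi s (pt m s)" if x: "x \<in> convex hull V" for x
    proof -
      obtain k where k: "good k" "valid k s" "phi s x \<le> val k s" using hull_cand[OF x] by blast
      obtain j where j: "good j" "\<forall>s'\<in>?C. valid j s'" "val k s \<le> val j s" using reduce[OF k(1,2) s] by blast
      have "val j s \<le> val m s" using m(2) j(1,2) s by (auto simp: Good_def)
      then show ?thesis using k(3) j(3) unfolding val_def by linarith
    qed
    then have "(SUP x. ereal (s \<bullet> x) - (ereal (quad_fun A qb qc x) + ind (convex hull V) x)) = ereal (phi s (pt m s))"
      using sup_eq[OF pt_in_hull[OF gm vm]] by blast
    then show "(SUP x. ereal (s \<bullet> x) - (ereal (quad_fun A qb qc x) + ind (convex hull V) x)) = ereal (quad_fun M w k0 s)"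
      using Mw unfolding val_def by simp
  qed
  then show "\<exists>M w k0. \<forall>s\<in>?C. (SUP x. ereal (s \<bullet> x) - (ereal (quad_fun A qb qc x) + ind (convex hull V) x)) = ereal (quad_fun M w k0 s)"
    by blast
qed

end

theorem proposition7:
  fixes A :: "real^2^2" and b :: "real^2" and c :: real
    and P :: "(real^2) set" and n :: nat
    and Ps :: "nat \<Rightarrow> (real^2) set" and r :: "nat \<Rightarrow> real^2 \<Rightarrow> real"
  assumes symA: "transpose A = A"
    and polyP: "polytope P" and neP: "P \<noteq> {}"
    and subdiv: "polyhedral_subdivision P n Ps"
    and pieces: "\<forall>j<n. affine_piece (Ps j) (r j) \<or> quadratic_piece (Ps j) (r j)
                        \<or> rational_piece (Ps j) (r j)"
    and env: "convex_envelope (\<lambda>x. ereal (quad_fun A b c x) + ind P x)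
              = (\<lambda>x. INF j\<in>{..<n}. ereal (r j x) + ind (Ps j) x)"
  shows "admits_parabolic_subdivision
           (\<lambda>s. SUP j\<in>{..<n}. conjugate (\<lambda>x. ereal (r j x) + ind (Ps j) x) s)"
proof -
  obtain V where V: "finite V" "P = convex hull V" using polyP unfolding polytope_def by blast
  have neV: "V \<noteq> {}" using neP V by auto
  interpret Q: qs A b c V using symA V neV by unfold_locales auto
  define g where "g x = ereal (quad_fun A b c x) + ind P x" for x
  define envf where "envf = convex_envelope g"
  define f where "f j x = ereal (r j x) + ind (Ps j) x" for j x
  have E: "envf x = (INF j\<in>{..<n}. f j x)" for x
    using fun_cong[OF env, of x] unfolding envf_def g_def f_def by simp
  have key: "(SUP j\<in>{..<n}. conjugate (f j) s) = (SUP x. ereal (s \<bullet> x) - g x)" for s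
  proof -
    have step1: "(SUP j\<in>{..<n}. conjugate (f j) s) = (SUP x. ereal (s \<bullet> x) - envf x)"
    proof (rule antisym)
      show "(SUP j\<in>{..<n}. conjugate (f j) s) \<le> (SUP x. ereal (s \<bullet> x) - envf x)"
      proof (rule SUP_least)
        fix j assume j: "j \<in> {..<n}"
        show "conjugate (f j) s \<le> (SUP x. ereal (s \<bullet> x) - envf x)"
          unfolding conjugate_def
        proof (rule SUP_mono)
          fix x
          have "envf x \<le> f j x" unfolding E using j by (rule INF_lower)
          then have "ereal (s \<bullet> x) - f j x \<le> ereal (s \<bullet> x) - envf x" by (intro ereal_minus_mono) auto
          then show "\<exists>x'\<in>UNIV. ereal (s \<bullet> x) - f j x \<le> ereal (s \<bullet> x') - envf x'" by blast
        qed
      qed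
      show "(SUP x. ereal (s \<bullet> x) - envf x) \<le> (SUP j\<in>{..<n}. conjugate (f j) s)"
      proof (rule SUP_least)
        fix x
        show "ereal (s \<bullet> x) - envf x \<le> (SUP j\<in>{..<n}. conjugate (f j) s)"
        proof (cases "n = 0")
          case True
          then have "envf x = \<infinity>" unfolding E by (simp add: top_ereal_def)
          then show ?thesis by simp
        next
          case False
          have fin: "finite ((\<lambda>j. f j x) ` {..<n})" "(\<lambda>j. f j x) ` {..<n} \<noteq> {}" using False by auto
          have "Inf ((\<lambda>j. f j x) ` {..<n}) \<in> (\<lambda>j. f j x) ` {..<n}"
            unfolding cInf_eq_Min[OF fin] by (rule Min_in[OF fin])
          then obtain j where j: "j < n" "envf x = f j x" unfolding E by auto
          have "ereal (s \<bullet> x) - envf x \<le> conjugate (f j) s"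
            unfolding conjugate_def j(2) by (rule SUP_upper) simp
          also have "\<dots> \<le> (SUP j\<in>{..<n}. conjugate (f j) s)" by (rule SUP_upper) (use j in simp)
          finally show ?thesis .
        qed
      qed
    qed
    obtain y where y: "y \<in> P" "\<forall>x\<in>P. Q.phi s x \<le> Q.phi s y"
      using continuous_attains_sup[OF finite_imp_compact_convex_hull[OF V(1)] _ Q.cont_phi] neP V(2) by blast
    define M where "M = Q.phi s y"
    have Fm: "(SUP x. ereal (s \<bullet> x) - g x) = ereal M"
      unfolding g_def M_def by (rule Q.sup_eq[OF y])
    have env_le: "envf x \<le> g x" for x
      unfolding envf_def convex_envelope_def by (rule SUP_least) auto
    have "(SUP x. ereal (s \<bullet> x) - envf x) \<le> ereal M"
    proof (rule SUP_least)
      fix x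
      define h where "h z = ereal (s \<bullet> z - M)" for z
      have epi: "epigraph h = {z. inner (s, -1) z \<le> M}"
        unfolding epigraph_def h_def by (auto simp: inner_Pair inner_commute)
      have "ereal_convex_fun h" unfolding ereal_convex_fun_def epi by (rule convex_halfspace_le)
      moreover have "ereal_lsc_fun h" unfolding ereal_lsc_fun_def epi by (rule closed_halfspace_le)
      moreover have "h z \<le> g z" for z
      proof (cases "z \<in> P")
        case True
        then have "Q.phi s z \<le> M" using y(2) M_def by auto
        then show ?thesis using True unfolding h_def g_def ind_def Q.phi_def by simp
      next
        case False
        then show ?thesis unfolding g_def ind_def by simp
      qed
      ultimately have "h x \<le> envf x" unfolding envf_def convex_envelope_def
        by (intro SUP_upper2[of h]) auto
      then have "ereal (s \<bullet> x) - envf x \<le> ereal (s \<bullet> x) - h x" by (intro ereal_minus_mono) auto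
      also have "\<dots> = ereal M" unfolding h_def by simp
      finally show "ereal (s \<bullet> x) - envf x \<le> ereal M" .
    qed
    moreover have "ereal M \<le> (SUP x. ereal (s \<bullet> x) - envf x)"
      unfolding Fm[symmetric]
    proof (rule SUP_mono)
      fix x
      have "ereal (s \<bullet> x) - g x \<le> ereal (s \<bullet> x) - envf x" using env_le by (intro ereal_minus_mono) auto
      then show "\<exists>x'\<in>UNIV. ereal (s \<bullet> x) - g x \<le> ereal (s \<bullet> x') - envf x'" by blast
    qed
    ultimately show ?thesis unfolding step1 Fm by (rule antisym)
  qed
  have "(\<lambda>s. SUP j\<in>{..<n}. conjugate (\<lambda>x. ereal (r j x) + ind (Ps j) x) s)
      = (\<lambda>s. SUP x. ereal (s \<bullet> x) - (ereal (quad_fun A b c x) + ind (convex hull V) x))"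
    using key unfolding f_def g_def V(2) by (intro ext) simp
  then show ?thesis using Q.main_qs by simp
qed

end
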